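(* Let $\Sigma$ be a finite nonempty set and let $\{(A_i,B_i)\in\mathbb{R}^{n\times n}\times\mathbb{R}^{n\times m} : i\in\Sigma\}$ be given. The switched control system $x(k+1)=A_{\sigma(k)}x(k)+B_{\sigma(k)}u(k)$ is mode-independent feedback stabilizable (IFS) if and only if it is current-mode-independent memory-feedback stabilizable (IFS$_m$).
   Context: Let $\Sigma$ be a finite nonempty set (alphabet) and $\{(A_i,B_i)\in\mathbb{R}^{n\times n}\times\mathbb{R}^{n\times m} : i\in\Sigma\}$. Consider the discrete-time switched control system $x(k+1)=A_{\sigma(k)}x(k)+B_{\sigma(k)}u(k)$, $k\in\mathbb{N}=\{0,1,2,\dots\}$, where the switching signal $\sigma:\mathbb{N}\to\Sigma$ is arbitrary (the set of all such signals is denoted $\Sigma^\omega$) and $u(k)\in\mathbb{R}^m$ is the control. $\|\cdot\|$ is the Euclidean norm. Let $\mathcal{H}$ be the set of all tuples $(x_k,\dots,x_0;\,i_k,\dots,i_0)$ with $k\in\mathbb{N}$, $x_j\in\mathbb{R}^n$, $i_j\in\Sigma$ (state string and mode string of equal length $k+1$), and let $\mathcal{H}_-$ be the set of all tuples $(x_k,\dots,x_0;\,i_{k-1},\dots,i_0)$ with $k\in\mathbb{N}$ (mode string one shorter than the state string; empty when $k=0$). Controllers are arbitrary functions (no regularity assumed) of the following kinds, each determining, for every $x_0\in\mathbb{R}^n$ and $\sigma\in\Sigma^\omega$, a unique closed-loop trajectory with $x(0)=x_0$: (1) static mode-independent $\Phi:\mathbb{R}^n\to\mathbb{R}^m$,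 with $u(k)=\Phi(x(k))$; (1)$^d$ static mode-dependent $\Phi_d:\Sigma\times\mathbb{R}^n\to\mathbb{R}^m$, with $u(k)=\Phi_d(\sigma(k),x(k))$; (2) current-mode-independent with memory $\Psi:\mathcal{H}_-\to\mathbb{R}^m$, with $u(k)=\Psi(x(k),\dots,x(0);\,\sigma(k-1),\dots,\sigma(0))$; (2)$^d$ current-mode-dependent with memory $\Psi_d:\mathcal{H}\to\mathbb{R}^m$, with $u(k)=\Psi_d(x(k),\dots,x(0);\,\sigma(k),\dots,\sigma(0))$. The closed loop is uniformly exponentially stable (UES) if there exist $M>0$ and $\gamma\in[0,1)$ such that $\|x(k)\|\le M\gamma^k\|x_0\|$ for all $x_0\in\mathbb{R}^n$, all $\sigma\in\Sigma^\omega$ and all $k\in\mathbb{N}$. The system is called IFS, DFS, IFS$_m$, DFS$_m$ if there exists a controller of kind (1), (1)$^d$, (2), (2)$^d$ respectively such that the closed loop is UES. *)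

theory Defs
  imports "HOL-Analysis.Analysis"
begin

primrec traj_static ::
  "('s \<Rightarrow> real^'n^'n) \<Rightarrow> ('s \<Rightarrow> real^'m^'n) \<Rightarrow> (real^'n \<Rightarrow> real^'m)
   \<Rightarrow> real^'n \<Rightarrow> (nat \<Rightarrow> 's) \<Rightarrow> nat \<Rightarrow> real^'n" where
  "traj_static A B \<Phi> x0 \<sigma> 0 = x0"
| "traj_static A B \<Phi> x0 \<sigma> (Suc k) =
     A (\<sigma> k) *v traj_static A B \<Phi> x0 \<sigma> k + B (\<sigma> k) *v \<Phi> (traj_static A B \<Phi> x0 \<sigma> k)"

text \<open>Closed loop under a current-mode-independent controller with memory
  Psi : H_- -> R^m. An element (x_k,...,x_0; i_{k-1},...,i_0) of H_- is encoded as
  the pair of lists [x_k,...,x_0] and [i_{k-1},...,i_0].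
  hist_mem ... k is the state string [x(k),...,x(0)].\<close>
primrec hist_mem ::
  "('s \<Rightarrow> real^'n^'n) \<Rightarrow> ('s \<Rightarrow> real^'m^'n) \<Rightarrow> ((real^'n) list \<Rightarrow> 's list \<Rightarrow> real^'m)
   \<Rightarrow> real^'n \<Rightarrow> (nat \<Rightarrow> 's) \<Rightarrow> nat \<Rightarrow> (real^'n) list" where
  "hist_mem A B \<Psi> x0 \<sigma> 0 = [x0]"
| "hist_mem A B \<Psi> x0 \<sigma> (Suc k) =
     (let h = hist_mem A B \<Psi> x0 \<sigma> k
      in (A (\<sigma> k) *v hd h + B (\<sigma> k) *v \<Psi> h (rev (map \<sigma> [0..<k]))) # h)"

definition traj_mem ::
  "('s \<Rightarrow> real^'n^'n) \<Rightarrow> ('s \<Rightarrow> real^'m^'n) \<Rightarrow> ((real^'n) list \<Rightarrow> 's list \<Rightarrow> real^'m)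
   \<Rightarrow> real^'n \<Rightarrow> (nat \<Rightarrow> 's) \<Rightarrow> nat \<Rightarrow> real^'n" where
  "traj_mem A B \<Psi> x0 \<sigma> k = hd (hist_mem A B \<Psi> x0 \<sigma> k)"

definition UES :: "(real^'n \<Rightarrow> (nat \<Rightarrow> 's) \<Rightarrow> nat \<Rightarrow> real^'n) \<Rightarrow> bool" where
  "UES traj \<longleftrightarrow> (\<exists>M>0. \<exists>\<gamma>. 0 \<le> \<gamma> \<and> \<gamma> < 1 \<and>
     (\<forall>x0 \<sigma> k. norm (traj x0 \<sigma> k) \<le> M * \<gamma> ^ k * norm x0))"

definition IFS :: "('s \<Rightarrow> real^'n^'n) \<Rightarrow> ('s \<Rightarrow> real^'m^'n) \<Rightarrow> bool" where
  "IFS A B \<longleftrightarrow> (\<exists>\<Phi>. UES (traj_static A B \<Phi>))"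

definition IFS_m :: "('s \<Rightarrow> real^'n^'n) \<Rightarrow> ('s \<Rightarrow> real^'m^'n) \<Rightarrow> bool" where
  "IFS_m A B \<longleftrightarrow> (\<exists>\<Psi>. UES (traj_mem A B \<Psi>))"

end

theory Submission
  imports Defs
begin

lemma hist_mem_ne: "hist_mem A B \<Psi> x0 \<sigma> k \<noteq> []"
  by (cases k) (simp_all add: Let_def)

lemma static_eq_mem:
  "traj_mem A B (\<lambda>h s. \<Phi> (hd h)) x0 \<sigma> k = traj_static A B \<Phi> x0 \<sigma> k"
  unfolding traj_mem_def by (induction k) (simp_all add: Let_def)

lemma shift_hist:
  fixes \<Psi> :: "(real^'n) list \<Rightarrow> 's list \<Rightarrow> real^'m"
  shows "hist_mem A B (\<lambda>h s. \<Psi> (h @ [x]) (s @ [i]))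
            (A i *v x + B i *v \<Psi> [x] []) \<sigma> k @ [x]
         = hist_mem A B \<Psi> x (case_nat i \<sigma>) (Suc k)"
proof (induction k)
  case 0
  then show ?case by (simp add: Let_def)
next
  case (Suc k)
  let ?h = "hist_mem A B (\<lambda>h s. \<Psi> (h @ [x]) (s @ [i])) (A i *v x + B i *v \<Psi> [x] []) \<sigma> k"
  have ne: "?h \<noteq> []" by (rule hist_mem_ne)
  have hd: "hd (?h @ [x]) = hd ?h" using ne by simp
  have m: "rev (map (case_nat i \<sigma>) [0..<Suc k]) = rev (map \<sigma> [0..<k]) @ [i]"
    by (simp add: map_upt_Suc del: upt_Suc)
  have L: "hist_mem A B (\<lambda>h s. \<Psi> (h @ [x]) (s @ [i])) (A i *v x + B i *v \<Psi> [x] []) \<sigma> (Suc k) @ [x]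
     = (A (\<sigma> k) *v hd ?h + B (\<sigma> k) *v \<Psi> (?h @ [x]) (rev (map \<sigma> [0..<k]) @ [i])) # (?h @ [x])"
    by (simp add: Let_def del: upt_Suc)
  have R: "hist_mem A B \<Psi> x (case_nat i \<sigma>) (Suc (Suc k))
     = (A (\<sigma> k) *v hd (?h @ [x]) + B (\<sigma> k) *v \<Psi> (?h @ [x]) (rev (map (case_nat i \<sigma>) [0..<Suc k]))) # (?h @ [x])"
    by (simp only: hist_mem.simps(2)[of A B \<Psi> x "case_nat i \<sigma>" "Suc k"] Suc.IH[symmetric] Let_def) simp
  show ?case unfolding L R hd m ..
qed

lemma shift_traj:
  fixes \<Psi> :: "(real^'n) list \<Rightarrow> 's list \<Rightarrow> real^'m"
  shows "traj_mem A B (\<lambda>h s. \<Psi> (h @ [x]) (s @ [i]))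
            (A i *v x + B i *v \<Psi> [x] []) \<sigma> k
         = traj_mem A B \<Psi> x (case_nat i \<sigma>) (Suc k)"
proof -
  have "hd (hist_mem A B (\<lambda>h s. \<Psi> (h @ [x]) (s @ [i])) (A i *v x + B i *v \<Psi> [x] []) \<sigma> k)
      = hd (hist_mem A B (\<lambda>h s. \<Psi> (h @ [x]) (s @ [i])) (A i *v x + B i *v \<Psi> [x] []) \<sigma> k @ [x])"
    using hist_mem_ne by (metis hd_append)
  then show ?thesis unfolding traj_mem_def shift_hist by simp
qed

lemma IFS_imp_IFS_m:
  fixes A :: "'s::finite \<Rightarrow> real^'n^'n" and B :: "'s \<Rightarrow> real^'m^'n"
  assumes "IFS A B" shows "IFS_m A B"
proof -
  from assms obtain \<Phi> where "UES (traj_static A B \<Phi>)" unfolding IFS_def by blast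
  then have "UES (traj_mem A B (\<lambda>h s. \<Phi> (hd h)))"
    unfolding UES_def static_eq_mem .
  then show ?thesis unfolding IFS_m_def by blast
qed

lemma IFS_m_imp_IFS:
  fixes A :: "'s::finite \<Rightarrow> real^'n^'n" and B :: "'s \<Rightarrow> real^'m^'n"
  assumes "IFS_m A B" shows "IFS A B"
proof -
  from assms obtain \<Psi>0 M \<gamma> where M: "M > 0" and g0: "0 \<le> \<gamma>" "\<gamma> < 1"
    and b0: "\<And>x0 \<sigma> k. norm (traj_mem A B \<Psi>0 x0 \<sigma> k) \<le> M * \<gamma> ^ k * norm x0"
    unfolding IFS_m_def UES_def by blast
  define g where "g = (1 + \<gamma>) / 2"
  have gpos: "0 < g" and g1: "g < 1" and gg: "\<gamma> \<le> g" using g0 by (auto simp: g_def)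
  define good where "good x c \<longleftrightarrow> (\<exists>\<Psi>. \<forall>\<sigma> k. norm (traj_mem A B \<Psi> x \<sigma> k) \<le> c * g ^ k)"
    for x c
  define W where "W x = Inf {c. good x c}" for x
  have goodM: "good x (M * norm x)" for x
    unfolding good_def
  proof (intro exI allI)
    fix \<sigma> k
    have "M * \<gamma> ^ k * norm x \<le> M * g ^ k * norm x"
      using M g0 gg by (intro mult_right_mono mult_left_mono power_mono) auto
    then show "norm (traj_mem A B \<Psi>0 x \<sigma> k) \<le> M * norm x * g ^ k"
      using b0[of x \<sigma> k] by (simp add: mult_ac)
  qed
  have goodlow: "norm x \<le> c" if "good x c" for x c
  proof -
    from that obtain \<Psi> where "\<forall>\<sigma> k. norm (traj_mem A B \<Psi> x \<sigma> k) \<le> c * g ^ k"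
      unfolding good_def by blast
    from this[rule_format, of undefined 0] show ?thesis by (simp add: traj_mem_def)
  qed
  have bdd: "bdd_below {c. good x c}" for x
    by (rule bdd_belowI[of _ 0]) (use goodlow norm_ge_zero order_trans in blast)
  have ne: "{c. good x c} \<noteq> {}" for x using goodM by blast
  have Wlow: "norm x \<le> W x" for x
    unfolding W_def by (rule cInf_greatest[OF ne]) (use goodlow in blast)
  have Wup: "W x \<le> c" if "good x c" for x c
    unfolding W_def by (rule cInf_lower) (use that bdd in auto)
  define \<rho> where "\<rho> = (1 + g) / 2"
  have rpos: "0 < \<rho>" and r1: "\<rho> < 1" and gr: "g < \<rho>" using gpos g1 by (auto simp: \<rho>_def)
  have ex: "\<exists>c \<Psi>. (\<forall>\<sigma> k. norm (traj_mem A B \<Psi> x \<sigma> k) \<le> c * g ^ k) \<and> c * g \<le> \<rho> * W x" for x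
  proof (cases "x = 0")
    case True
    have "good x 0" using goodM[of x] True by simp
    moreover have "0 \<le> W x" using Wlow[of x] norm_ge_zero order_trans by blast
    ultimately show ?thesis unfolding good_def using rpos
      by (intro exI[of _ 0]) auto
  next
    case False
    have Wp: "0 < W x" using Wlow[of x] False by (meson zero_less_norm_iff order_less_le_trans)
    have "W x < (\<rho> / g) * W x" using Wp gr gpos by (simp add: field_simps)
    then obtain c where c: "good x c" "c < (\<rho> / g) * W x"
      unfolding W_def using cInf_less_iff[OF ne bdd] by (metis mem_Collect_eq W_def)
    have "c * g \<le> \<rho> * W x" using c(2) gpos by (simp add: field_simps)
    with c(1) show ?thesis unfolding good_def by blast
  qed
  then obtain C P where CP: "\<And>x \<sigma> k. norm (traj_mem A B (P x) x \<sigma> k) \<le> C x * g ^ k"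
    and CW: "\<And>x. C x * g \<le> \<rho> * W x"
    by metis
  define \<Phi> where "\<Phi> x = P x [x] []" for x
  have step: "W (A i *v x + B i *v \<Phi> x) \<le> \<rho> * W x" for i x
  proof -
    have "good (A i *v x + B i *v \<Phi> x) (C x * g)"
      unfolding good_def \<Phi>_def
    proof (intro exI allI)
      fix \<sigma> k
      show "norm (traj_mem A B (\<lambda>h s. P x (h @ [x]) (s @ [i])) (A i *v x + B i *v P x [x] []) \<sigma> k)
            \<le> C x * g * g ^ k"
        unfolding shift_traj using CP[of x "case_nat i \<sigma>" "Suc k"] by (simp add: mult_ac)
    qed
    then show ?thesis using Wup CW order_trans by blast
  qed
  have Wk: "W (traj_static A B \<Phi> x0 \<sigma> k) \<le> \<rho> ^ k * W x0" for x0 \<sigma> k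
  proof (induction k)
    case 0 then show ?case by simp
  next
    case (Suc k)
    have "W (traj_static A B \<Phi> x0 \<sigma> (Suc k)) \<le> \<rho> * W (traj_static A B \<Phi> x0 \<sigma> k)"
      using step by simp
    also have "\<dots> \<le> \<rho> * (\<rho> ^ k * W x0)" using Suc rpos by (simp add: mult_left_mono)
    finally show ?case by simp
  qed
  have "norm (traj_static A B \<Phi> x0 \<sigma> k) \<le> M * \<rho> ^ k * norm x0" for x0 \<sigma> k
  proof -
    have "norm (traj_static A B \<Phi> x0 \<sigma> k) \<le> \<rho> ^ k * W x0" using Wlow Wk order_trans by blast
    also have "\<dots> \<le> \<rho> ^ k * (M * norm x0)" using Wup[OF goodM] rpos by (simp add: mult_left_mono)
    finally show ?thesis by (simp add: mult_ac)
  qed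
  then have "UES (traj_static A B \<Phi>)" unfolding UES_def using M rpos r1
    by (intro exI[of _ M] conjI exI[of _ \<rho>]) auto
  then show ?thesis unfolding IFS_def by blast
qed

theorem theorem1:
  fixes A :: "'s::finite \<Rightarrow> real^'n^'n" and B :: "'s \<Rightarrow> real^'m^'n"
  shows "IFS A B \<longleftrightarrow> IFS_m A B"
  using IFS_imp_IFS_m IFS_m_imp_IFS by blast

end
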